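(* Let $D$ be a positive integer that is not a perfect square, and let $Q_1,Q_2,Q_3$ be forms in the principal cycle of determinant $D$. Suppose $\tilde I\approx Q_1$ via $S_1=\pm L_{k_1}$ and $\tilde I\approx Q_2$ via $S_2=\pm L_{k_2}$, where $k_1,k_2\ge0$. Suppose $Q_3=Q_1\circ Q_2$ via a bilinear matrix $B$ with $\log\|B\|\le c_1\log D$ for a constant $c_1$. Let $S_3$ be defined by $S_3B=B_0(S_1\otimes S_2)$, where $B_0=\begin{pmatrix}1&0&0&D-\lambda^2\\0&1&1&2\lambda\end{pmatrix}$, $\lambda=\lfloor\sqrt D\rfloor$, and suppose $S_3=\pm L_{k_3}$. Define $\xi$ by $$\log\|L_{k_3}\|=\log\|L_{k_1}\|+\log\|L_{k_2}\|+\xi.$$ Then $|\xi|\le (c_1+4)\log D$.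
   Context: Forms $[a,2b,c]$ mean $ax_1^2+2bx_1x_2+cx_2^2$ with matrix $\begin{pmatrix} a&b\\ b&c\end{pmatrix}$, determinant $b^2-ac$. $Q\approx Q'$ via $S$: $S$ integer $2\times2$, $\det S=1$, $S^tQS=Q'$. Reduced form of determinant $D$: $0<b<\sqrt D$, $\sqrt D-b<|a|<\sqrt D+b$. $\tilde I=[1,2\lambda,\lambda^2-D]$. The right neighbor of a reduced $Q_1=[a_1,2b_1,c_1]$ is $S^tQ_1S$ with $S=\begin{pmatrix}0&1\\-1&\mu\end{pmatrix}$, $\mu$ the integer with $-\sqrt D-b_1<\mu c_1<-\sqrt D-b_1+|c_1|$. Principal cycle: $Q^{(0)}=\tilde I$, $Q^{(j)}$ the right neighbor of $Q^{(j-1)}$, $S^{(j)}$ the corresponding matrix; $L_0=$ identity, $L_j=S^{(1)}\cdots S^{(j)}$ for $j\ge1$; the cycle has least period $2p$; for negative $j$, $S^{(j)}=(S^{(j_0)})^{-1}$ with $j\equiv j_0\pmod{2p}$, $0<j_0\le2p$, and $L_{-j}=S^{(-j)}\cdots S^{(-1)}$. Composition $Q_3=Q_1\circ Q_2$ via a $2\times4$ integer matrix $B$: $(x^tQ_1x)(y^tQ_2y)=z^tB^tQ_3Bz$ identically with $z=(x_1y_1,x_1y_2,x_2y_1,x_2y_2)^t$, where $B$ is unimodular (its six $2\times2$ minors $\Delta_{ik}$ from columns $i<k$ have gcd 1) and oriented ($a_1\Delta_{12}>0$, $a_2\Delta_{13}>0$, $a_i$ the leading coefficient of $Q_i$). $\otimes$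 is the Kronecker product. $\|M\|$ is the maximum absolute value of the entries of $M$. Logarithms: $\log x=\log_2|x|$ if $|x|\ge4$, and $\log x=2$ if $|x|<4$. *)

theory Defs
  imports Complex_Main "Jordan_Normal_Form.Determinant"
begin

(* A binary quadratic form [a,2b,c] is represented by its symmetric 2x2 integer
   matrix  (a b; b c). *)

definition mat2 :: "int \<Rightarrow> int \<Rightarrow> int \<Rightarrow> int \<Rightarrow> int mat" where
  "mat2 a b c d = mat_of_rows_list 2 [[a, b], [c, d]]"

definition isqrt :: "int \<Rightarrow> int" where
  "isqrt D = \<lfloor>sqrt (real_of_int D)\<rfloor>"

definition Itilde :: "int \<Rightarrow> int mat" where
  "Itilde D = mat2 1 (isqrt D) (isqrt D) (isqrt D ^ 2 - D)"

definition nb_mu :: "int \<Rightarrow> int mat \<Rightarrow> int" where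
  "nb_mu D Q = (THE \<mu>::int.
      - sqrt (real_of_int D) - real_of_int (Q $$ (0,1)) < real_of_int (\<mu> * Q $$ (1,1)) \<and>
      real_of_int (\<mu> * Q $$ (1,1)) < - sqrt (real_of_int D) - real_of_int (Q $$ (0,1)) + real_of_int \<bar>Q $$ (1,1)\<bar>)"

definition nb_S :: "int \<Rightarrow> int mat \<Rightarrow> int mat" where
  "nb_S D Q = mat2 0 1 (-1) (nb_mu D Q)"

definition right_neighbor :: "int \<Rightarrow> int mat \<Rightarrow> int mat" where
  "right_neighbor D Q = transpose_mat (nb_S D Q) * Q * nb_S D Q"

definition Qcyc :: "int \<Rightarrow> nat \<Rightarrow> int mat" where
  "Qcyc D j = (right_neighbor D ^^ j) (Itilde D)"

definition principal_cycle :: "int \<Rightarrow> int mat set" where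
  "principal_cycle D = range (Qcyc D)"

(* S^(j) for j >= 1 *)
definition Scyc :: "int \<Rightarrow> nat \<Rightarrow> int mat" where
  "Scyc D j = nb_S D (Qcyc D (j - 1))"

definition cyc_period :: "int \<Rightarrow> nat" where
  "cyc_period D = (LEAST n. n > 0 \<and> Qcyc D n = Qcyc D 0)"

definition inv2 :: "int mat \<Rightarrow> int mat" where
  "inv2 M = mat2 (M $$ (1,1)) (- M $$ (0,1)) (- M $$ (1,0)) (M $$ (0,0))"

(* S^(-m) for m >= 1: inverse of S^(j0), j0 == -m mod 2p, 0 < j0 <= 2p *)
definition Sneg :: "int \<Rightarrow> nat \<Rightarrow> int mat" where
  "Sneg D m = (let P = int (cyc_period D); r = (- int m) mod P
               in inv2 (Scyc D (nat (if r = 0 then P else r))))"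

fun Lpos :: "int \<Rightarrow> nat \<Rightarrow> int mat" where
  "Lpos D 0 = 1\<^sub>m 2"
| "Lpos D (Suc j) = Lpos D j * Scyc D (Suc j)"

fun Lneg :: "int \<Rightarrow> nat \<Rightarrow> int mat" where
  "Lneg D 0 = 1\<^sub>m 2"
| "Lneg D (Suc j) = Sneg D (Suc j) * Lneg D j"

definition Lcyc :: "int \<Rightarrow> int \<Rightarrow> int mat" where
  "Lcyc D k = (if k \<ge> 0 then Lpos D (nat k) else Lneg D (nat (- k)))"

definition equiv_via :: "int mat \<Rightarrow> int mat \<Rightarrow> int mat \<Rightarrow> bool" where
  "equiv_via Q Q' S \<longleftrightarrow> S \<in> carrier_mat 2 2 \<and> det S = 1 \<and> transpose_mat S * Q * S = Q'"

definition minor24 :: "int mat \<Rightarrow> nat \<Rightarrow> nat \<Rightarrow> int" where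
  "minor24 B i k = B $$ (0,i) * B $$ (1,k) - B $$ (0,k) * B $$ (1,i)"

definition qval :: "int mat \<Rightarrow> int vec \<Rightarrow> int" where
  "qval Q x = x \<bullet> (Q *\<^sub>v x)"

definition composes_via :: "int mat \<Rightarrow> int mat \<Rightarrow> int mat \<Rightarrow> int mat \<Rightarrow> bool" where
  "composes_via Q1 Q2 Q3 B \<longleftrightarrow>
     B \<in> carrier_mat 2 4 \<and>
     (\<forall>x1 x2 y1 y2 :: int.
        qval Q1 (vec_of_list [x1, x2]) * qval Q2 (vec_of_list [y1, y2])
        = (let z = vec_of_list [x1*y1, x1*y2, x2*y1, x2*y2] in z \<bullet> (transpose_mat B * Q3 * B *\<^sub>v z))) \<and>
     Gcd ((\<lambda>(i,k). minor24 B i k) ` {(i,k). i < k \<and> k < 4}) = 1 \<and>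
     Q1 $$ (0,0) * minor24 B 0 1 > 0 \<and> Q2 $$ (0,0) * minor24 B 0 2 > 0"

definition kron :: "int mat \<Rightarrow> int mat \<Rightarrow> int mat" where
  "kron A B = mat (dim_row A * dim_row B) (dim_col A * dim_col B)
     (\<lambda>(i,j). A $$ (i div dim_row B, j div dim_col B) * B $$ (i mod dim_row B, j mod dim_col B))"

definition B0 :: "int \<Rightarrow> int mat" where
  "B0 D = mat_of_rows_list 4 [[1, 0, 0, D - isqrt D ^ 2], [0, 1, 1, 2 * isqrt D]]"

definition mnorm :: "int mat \<Rightarrow> int" where
  "mnorm M = Max {\<bar>M $$ (i,j)\<bar> | i j. i < dim_row M \<and> j < dim_col M}"

definition lg :: "real \<Rightarrow> real" where
  "lg x = (if \<bar>x\<bar> \<ge> 4 then log 2 \<bar>x\<bar> else 2)"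

end

theory Submission
  imports Defs
begin


lemma mat2_carrier[simp]: "mat2 a b c d \<in> carrier_mat 2 2"
proof -
  have "length [[a, b], [c, d]] = 2" by simp
  then show ?thesis unfolding mat2_def mat_of_rows_list_def by (metis mat_carrier)
qed
lemma mat2_dims[simp]: "dim_row (mat2 a b c d) = 2" "dim_col (mat2 a b c d) = 2"
  by (simp_all add: mat2_def mat_of_rows_list_def)
lemma mat2_idx[simp]: "mat2 a b c d $$ (0,0) = a" "mat2 a b c d $$ (0,1) = b"
  "mat2 a b c d $$ (1,0) = c" "mat2 a b c d $$ (1,1) = d"
  by (simp_all add: mat2_def mat_of_rows_list_def)

lemma mat2_eqI: assumes "A \<in> carrier_mat 2 2"
  shows "A = mat2 (A$$(0,0)) (A$$(0,1)) (A$$(1,0)) (A$$(1,1))"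
proof (rule eq_matI)
  fix i j assume "i < dim_row (mat2 (A$$(0,0)) (A$$(0,1)) (A$$(1,0)) (A$$(1,1)))"
     "j < dim_col (mat2 (A$$(0,0)) (A$$(0,1)) (A$$(1,0)) (A$$(1,1)))"
  then have "i = 0 \<or> i = 1" "j = 0 \<or> j = 1" by auto
  then show "A $$ (i, j) = mat2 (A$$(0,0)) (A$$(0,1)) (A$$(1,0)) (A$$(1,1)) $$ (i, j)"
    by (elim disjE) (simp_all only: mat2_idx)
qed (use assms in auto)

lemma mat2_mult: "mat2 a b c d * mat2 e f g h = mat2 (a*e+b*g) (a*f+b*h) (c*e+d*g) (c*f+d*h)"
  apply (rule eq_matI)
  apply (auto simp: mat2_def mat_of_rows_list_def scalar_prod_def less_Suc_eq numeral_2_eq_2 row_def col_def)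
  done

lemma mat2_transpose: "transpose_mat (mat2 a b c d) = mat2 a c b d"
  apply (rule eq_matI)
  apply (auto simp: mat2_def mat_of_rows_list_def less_Suc_eq numeral_2_eq_2)
  done

lemma one2: "(1\<^sub>m 2 :: int mat) = mat2 1 0 0 1"
  apply (rule eq_matI)
  apply (auto simp: mat2_def mat_of_rows_list_def less_Suc_eq numeral_2_eq_2)
  done

lemma uminus_mat2: "- mat2 a b c d = mat2 (-a) (-b) (-c) (-d)"
  apply (rule eq_matI)
  apply (auto simp: mat2_def mat_of_rows_list_def less_Suc_eq numeral_2_eq_2)
  done

lemma mnorm_set: "{\<bar>M $$ (i,j)\<bar> | i j. i < dim_row M \<and> j < dim_col M}
   = (\<lambda>(i,j). \<bar>M $$ (i,j)\<bar>) ` ({..<dim_row M} \<times> {..<dim_col M})"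
  by auto

lemma mnorm_ge: "i < dim_row M \<Longrightarrow> j < dim_col M \<Longrightarrow> \<bar>M $$ (i,j)\<bar> \<le> mnorm M"
  unfolding mnorm_def mnorm_set by (rule Max_ge) auto

lemma mnorm_le: "0 < dim_row M \<Longrightarrow> 0 < dim_col M \<Longrightarrow>
   (\<And>i j. i < dim_row M \<Longrightarrow> j < dim_col M \<Longrightarrow> \<bar>M $$ (i,j)\<bar> \<le> c) \<Longrightarrow> mnorm M \<le> c"
  unfolding mnorm_def mnorm_set by (subst Max_le_iff) auto

lemma mnorm_uminus: "mnorm (- M) = mnorm M"
  proof -
  have "{\<bar>(- M) $$ (i,j)\<bar> | i j. i < dim_row (- M) \<and> j < dim_col (- M)}
      = {\<bar>M $$ (i,j)\<bar> | i j. i < dim_row M \<and> j < dim_col M}"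
    unfolding mnorm_set by (rule image_cong) auto
  then show ?thesis unfolding mnorm_def by simp
qed

lemma mult24: assumes "S \<in> carrier_mat 2 2" "B \<in> carrier_mat 2 4" "r < 2" "j < 4"
  shows "(S * B) $$ (r,j) = S$$(r,0)*B$$(0,j) + S$$(r,1)*B$$(1,j)"
  using assms by (auto simp: scalar_prod_def row_def col_def numeral_2_eq_2)

lemma kron_dims: "A \<in> carrier_mat 2 2 \<Longrightarrow> C \<in> carrier_mat 2 2 \<Longrightarrow> kron A C \<in> carrier_mat 4 4"
  by (auto simp: kron_def)

lemma kron_idx: "A \<in> carrier_mat 2 2 \<Longrightarrow> C \<in> carrier_mat 2 2 \<Longrightarrow> i < 4 \<Longrightarrow> j < 4 \<Longrightarrow>
  kron A C $$ (i,j) = A $$ (i div 2, j div 2) * C $$ (i mod 2, j mod 2)"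
  by (auto simp: kron_def)

lemma B0_M: assumes "K \<in> carrier_mat 4 4" "j < 4"
  shows "(B0 D * K) $$ (0,j) = K$$(0,j) + (D - isqrt D ^ 2) * K$$(3,j)"
    "(B0 D * K) $$ (1,j) = K$$(1,j) + K$$(2,j) + 2 * isqrt D * K$$(3,j)"
  using assms by (auto simp: B0_def mat_of_rows_list_def scalar_prod_def row_def col_def eval_nat_numeral)



definition phi :: "int \<Rightarrow> int \<Rightarrow> int \<Rightarrow> real" where
  "phi D x1 x2 = real_of_int x1 + real_of_int x2 * (real_of_int (isqrt D) + sqrt (real_of_int D))"
definition psi :: "int \<Rightarrow> int \<Rightarrow> int \<Rightarrow> real" where
  "psi D x1 x2 = real_of_int x1 + real_of_int x2 * (real_of_int (isqrt D) - sqrt (real_of_int D))"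

lemma basics:
  assumes "D > 0" "\<not> (\<exists>r::int. r ^ 2 = D)"
  shows "1 \<le> isqrt D" "real_of_int (isqrt D) < sqrt (real_of_int D)"
    "sqrt (real_of_int D) < real_of_int (isqrt D) + 1"
    "sqrt (real_of_int D) * sqrt (real_of_int D) = real_of_int D"
    "\<And>m::int. sqrt (real_of_int D) \<noteq> real_of_int m" "D \<ge> 2"
    "0 \<le> D - isqrt D ^ 2" "D - isqrt D ^ 2 \<le> 2 * isqrt D"
proof -
  let ?s = "sqrt (real_of_int D)"
  have "0 \<le> D" using assms(1) by simp
  then have ss: "?s * ?s = real_of_int D" by simp
  show "?s * ?s = real_of_int D" by (fact ss)
  have s0: "?s \<ge> 0" using \<open>0 \<le> D\<close> by simp
  show ni: "?s \<noteq> real_of_int m" for m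
  proof
    assume h: "?s = real_of_int m"
    then have "real_of_int (m^2) = real_of_int D" using ss by (simp add: power2_eq_square)
    then have "m^2 = D" by linarith
    with assms(2) show False by blast
  qed
  have fl: "real_of_int (isqrt D) \<le> ?s" "?s < real_of_int (isqrt D) + 1"
    unfolding isqrt_def by linarith+
  then show "?s < real_of_int (isqrt D) + 1" by simp
  show lt: "real_of_int (isqrt D) < ?s" using fl(1) ni[of "isqrt D"] by linarith
  have "D \<noteq> 1" using assms(2) by (metis one_power2)
  then show "D \<ge> 2" using assms(1) by linarith
  then have "?s \<ge> 1" by simp
  then show l1: "1 \<le> isqrt D" unfolding isqrt_def by linarith
  have "real_of_int (isqrt D) * real_of_int (isqrt D) \<le> ?s * ?s"
    using fl(1) l1 \<open>0 \<le> D\<close> by (intro mult_mono) auto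
  then have "real_of_int (isqrt D * isqrt D) \<le> real_of_int D" by (metis ss of_int_mult)
  then have "isqrt D * isqrt D \<le> D" by linarith
  then show "0 \<le> D - isqrt D ^ 2" by (simp add: power2_eq_square)
  have "?s * ?s < (real_of_int (isqrt D) + 1) * (real_of_int (isqrt D) + 1)"
    using fl(2) s0 l1 by (intro mult_strict_mono) auto
  then have "real_of_int D < real_of_int ((isqrt D + 1)^2)" using ss by (simp add: power2_eq_square)
  then have "D < (isqrt D + 1)^2" by linarith
  then show "D - isqrt D ^ 2 \<le> 2 * isqrt D" by (simp add: power2_eq_square algebra_simps)
qed

lemma int_in_interval:
  fixes y :: real assumes "\<And>m::int. y \<noteq> real_of_int m"
  shows "\<exists>!n::int. y < real_of_int n \<and> real_of_int n < y + 1"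
proof
  show "y < real_of_int (\<lfloor>y\<rfloor> + 1) \<and> real_of_int (\<lfloor>y\<rfloor> + 1) < y + 1"
    using assms[of "\<lfloor>y\<rfloor>"] by linarith
next
  fix n :: int assume "y < real_of_int n \<and> real_of_int n < y + 1"
  then show "n = \<lfloor>y\<rfloor> + 1" by linarith
qed

lemma mu_unique:
  fixes s :: real and b c :: int
  assumes ni: "\<And>m::int. s \<noteq> real_of_int m" and c0: "c \<noteq> 0"
  shows "\<exists>!\<mu>::int. - s - real_of_int b < real_of_int (\<mu> * c) \<and>
           real_of_int (\<mu> * c) < - s - real_of_int b + real_of_int \<bar>c\<bar>"
proof -
  let ?y = "(- s - real_of_int b) / real_of_int \<bar>c\<bar>"
  have cp: "real_of_int \<bar>c\<bar> > 0" using c0 by simp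
  have yn: "?y \<noteq> real_of_int m" for m
  proof
    assume "?y = real_of_int m"
    then have "- s - real_of_int b = real_of_int m * real_of_int \<bar>c\<bar>" using cp by (simp add: field_simps)
    then have "s = real_of_int (- b - m * \<bar>c\<bar>)" by simp
    with ni show False by blast
  qed
  obtain n where n: "?y < real_of_int n \<and> real_of_int n < ?y + 1"
    and nu: "\<And>n'. ?y < real_of_int n' \<and> real_of_int n' < ?y + 1 \<Longrightarrow> n' = n"
    using int_in_interval[OF yn] by metis
  have equiv: "(- s - real_of_int b < real_of_int (\<mu> * c) \<and>
           real_of_int (\<mu> * c) < - s - real_of_int b + real_of_int \<bar>c\<bar>) \<longleftrightarrow>
           (?y < real_of_int (\<mu> * sgn c) \<and> real_of_int (\<mu> * sgn c) < ?y + 1)" for \<mu>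
  proof -
    have "\<mu> * c = (\<mu> * sgn c) * \<bar>c\<bar>" by (simp only: mult.assoc sgn_mult_abs)
    then have e: "real_of_int (\<mu> * c) = real_of_int (\<mu> * sgn c) * real_of_int \<bar>c\<bar>"
      by (simp only: of_int_mult)
    have 1: "?y < real_of_int (\<mu> * sgn c) \<longleftrightarrow> - s - real_of_int b < real_of_int (\<mu> * sgn c) * real_of_int \<bar>c\<bar>"
      using cp by (rule pos_divide_less_eq)
    have y1: "?y + 1 = (- s - real_of_int b + real_of_int \<bar>c\<bar>) / real_of_int \<bar>c\<bar>"
      using cp by (simp add: add_divide_distrib)
    have 2: "real_of_int (\<mu> * sgn c) < ?y + 1 \<longleftrightarrow> real_of_int (\<mu> * sgn c) * real_of_int \<bar>c\<bar> < - s - real_of_int b + real_of_int \<bar>c\<bar>"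
      unfolding y1 using cp by (rule pos_less_divide_eq)
    show ?thesis unfolding e 1 2 ..
  qed
  have sq: "sgn c * sgn c = 1" using c0 by (simp add: sgn_if)
  show ?thesis
  proof
    show "- s - real_of_int b < real_of_int ((n * sgn c) * c) \<and>
           real_of_int ((n * sgn c) * c) < - s - real_of_int b + real_of_int \<bar>c\<bar>"
    proof -
      have "n * sgn c * sgn c = n" using sq by (simp only: mult.assoc mult_1_right)
      then show ?thesis unfolding equiv using n by (simp only:)
    qed
  next
    fix \<mu> assume "- s - real_of_int b < real_of_int (\<mu> * c) \<and>
           real_of_int (\<mu> * c) < - s - real_of_int b + real_of_int \<bar>c\<bar>"
    then have "?y < real_of_int (\<mu> * sgn c) \<and> real_of_int (\<mu> * sgn c) < ?y + 1" by (simp only: equiv)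
    then have "\<mu> * sgn c = n" by (rule nu)
    then have "\<mu> * sgn c * sgn c = n * sgn c" by simp
    then show "\<mu> = n * sgn c" using sq by (simp only: mult.assoc mult_1_right)
  qed
qed

lemma red_step:
  fixes s :: real and a b c \<mu> :: int
  assumes b0: "0 < b" and bs: "real_of_int b < s" and a1: "s - b < \<bar>a\<bar>" and a2: "\<bar>a\<bar> < s + b"
    and ac: "real_of_int (a * c) = (b - s) * (b + s)"
    and m1: "- s - b < real_of_int (\<mu> * c)" and m2: "real_of_int (\<mu> * c) < - s - b + \<bar>c\<bar>"
  shows "0 < - b - \<mu> * c" "real_of_int (- b - \<mu> * c) < s"
    "s - real_of_int (- b - \<mu> * c) < \<bar>c\<bar>" "\<bar>c\<bar> < s + real_of_int (- b - \<mu> * c)"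
proof -
  have sp: "s > 0" using b0 bs by linarith
  have acabs: "real_of_int \<bar>a\<bar> * real_of_int \<bar>c\<bar> = (s - b) * (s + b)"
  proof -
    have "real_of_int \<bar>a\<bar> * real_of_int \<bar>c\<bar> = \<bar>real_of_int (a * c)\<bar>" by (simp add: abs_mult)
    also have "\<dots> = \<bar>(b - s) * (b + s)\<bar>" using ac by simp
    also have "\<dots> = (s - b) * (s + b)" using b0 bs by (simp add: abs_mult)
    finally show ?thesis .
  qed
  have c1: "s - b < \<bar>c\<bar>"
  proof (rule ccontr)
    assume h: "\<not> s - b < \<bar>c\<bar>"
    have "real_of_int \<bar>a\<bar> * real_of_int \<bar>c\<bar> \<le> real_of_int \<bar>a\<bar> * (s - b)"
      using h by (intro mult_left_mono) auto
    also have "\<dots> < (s + b) * (s - b)"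
      using a2 bs by (intro mult_strict_right_mono) auto
    finally show False using acabs by (simp add: mult.commute)
  qed
  have c2: "\<bar>c\<bar> < s + b"
  proof (rule ccontr)
    assume h: "\<not> \<bar>c\<bar> < s + b"
    have "(s - b) * (s + b) < real_of_int \<bar>a\<bar> * (s + b)"
      using a1 b0 sp by (intro mult_strict_right_mono) auto
    also have "\<dots> \<le> real_of_int \<bar>a\<bar> * real_of_int \<bar>c\<bar>"
      using h by (intro mult_left_mono) auto
    finally show False using acabs by simp
  qed
  show "real_of_int (- b - \<mu> * c) < s" using m1 by simp
  show "s - real_of_int (- b - \<mu> * c) < \<bar>c\<bar>" using m2 by simp
  have "0 < - b - \<mu> * c \<and> \<bar>c\<bar> < s + real_of_int (- b - \<mu> * c)"
  proof (cases "real_of_int \<bar>c\<bar> \<le> s")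
    case True
    have "real_of_int (- b - \<mu> * c) > 0" using m2 True by simp
    then have "0 < - b - \<mu> * c" by (simp only: of_int_0_less_iff)
    moreover have "\<bar>c\<bar> < s + real_of_int (- b - \<mu> * c)" using \<open>real_of_int (- b - \<mu> * c) > 0\<close> True by linarith
    ultimately show ?thesis by blast
  next
    case False
    define m where "m = - \<mu> * sgn c - 1"
    have "c \<noteq> 0" using False sp by auto
    then have e: "- b - \<mu> * c = \<bar>c\<bar> - b + m * \<bar>c\<bar>"
      unfolding m_def by (simp add: algebra_simps) (metis abs_mult_sgn mult.assoc mult.left_commute mult_minus_left)
    have "\<bar>real_of_int m\<bar> * real_of_int \<bar>c\<bar> < 1 * real_of_int \<bar>c\<bar>"
    proof -
      have e2: "m * \<bar>c\<bar> = (- b - \<mu> * c) - (\<bar>c\<bar> - b)" using e by linarith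
      have "real_of_int (m * \<bar>c\<bar>) = real_of_int (- b - \<mu> * c) - real_of_int (\<bar>c\<bar> - b)"
        unfolding e2 by (rule of_int_diff)
      moreover have "s - \<bar>c\<bar> < real_of_int (- b - \<mu> * c)" "real_of_int (- b - \<mu> * c) < s" using m1 m2 by simp_all
      moreover have "s - \<bar>c\<bar> < real_of_int (\<bar>c\<bar> - b)" "real_of_int (\<bar>c\<bar> - b) < s"
        using False bs c2 by simp_all
      ultimately have "\<bar>real_of_int (m * \<bar>c\<bar>)\<bar> < \<bar>c\<bar>" by linarith
      then show ?thesis by (simp add: abs_mult)
    qed
    then have "\<bar>real_of_int m\<bar> < 1"
      by (rule mult_right_less_imp_less) simp
    then have "m = 0" by linarith
    then have eq: "- b - \<mu> * c = \<bar>c\<bar> - b" using e by simp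
    have r: "real_of_int b < real_of_int \<bar>c\<bar>" using False bs by linarith
    then have "b < \<bar>c\<bar>" by (simp only: of_int_less_iff)
    moreover have "\<bar>c\<bar> < s + real_of_int (\<bar>c\<bar> - b)" using bs by simp
    ultimately show ?thesis unfolding eq by simp
  qed
  then show "0 < - b - \<mu> * c" "\<bar>c\<bar> < s + real_of_int (- b - \<mu> * c)"
    by (fact conjunct1, fact conjunct2)
qed



lemma phi_neg: "phi D (- x) (- y) = - phi D x y" by (simp add: phi_def algebra_simps)
lemma psi_neg: "psi D (- x) (- y) = - psi D x y" by (simp add: psi_def algebra_simps)
lemma phi_lin: "phi D (p + q * m) (r + t * m) = phi D p r + real_of_int m * phi D q t"
  by (simp add: phi_def algebra_simps)
lemma psi_lin: "psi D (p + q * m) (r + t * m) = psi D p r + real_of_int m * psi D q t"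
  by (simp add: psi_def algebra_simps)

lemma Qcyc_Suc: "Qcyc D (Suc k) = right_neighbor D (Qcyc D k)" by (simp add: Qcyc_def)
lemma Qcyc_0: "Qcyc D 0 = Itilde D" by (simp add: Qcyc_def)
lemma Scyc_Suc: "Scyc D (Suc k) = nb_S D (Qcyc D k)" by (simp add: Scyc_def)

definition cinv :: "int \<Rightarrow> nat \<Rightarrow> bool" where
  "cinv D k \<longleftrightarrow> (\<exists>p q r t a b c. Lpos D k = mat2 p q r t \<and> Qcyc D k = mat2 a b b c \<and>
     real_of_int a = phi D p r * psi D p r \<and> real_of_int c = phi D q t * psi D q t \<and>
     phi D p r * psi D q t = real_of_int b - sqrt (real_of_int D) \<and>
     psi D p r * phi D q t = real_of_int b + sqrt (real_of_int D) \<and>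
     0 < b \<and> real_of_int b < sqrt (real_of_int D) \<and>
     sqrt (real_of_int D) - real_of_int b < real_of_int \<bar>a\<bar> \<and>
     real_of_int \<bar>a\<bar> < sqrt (real_of_int D) + real_of_int b \<and> \<bar>psi D p r\<bar> \<le> 1)"

lemma cinv_0:
  assumes "D > 0" "\<not> (\<exists>r::int. r ^ 2 = D)"
  shows "cinv D 0"
proof -
  note bs = basics[OF assms]
  let ?s = "sqrt (real_of_int D)" and ?l = "isqrt D"
  have L: "Lpos D 0 = mat2 1 0 0 1" by (simp add: one2)
  have Q: "Qcyc D 0 = mat2 1 ?l ?l (?l ^ 2 - D)" by (simp add: Qcyc_0 Itilde_def)
  have p1: "phi D 1 0 = 1" "psi D 1 0 = 1" by (simp_all add: phi_def psi_def)
  have p2: "phi D 0 1 = ?l + ?s" "psi D 0 1 = ?l - ?s" by (simp_all add: phi_def psi_def)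
  have c: "real_of_int (?l ^ 2 - D) = (?l + ?s) * (?l - ?s)"
    using bs(4) by (simp add: algebra_simps power2_eq_square)
  show ?thesis unfolding cinv_def
    apply (rule exI[of _ 1], rule exI[of _ 0], rule exI[of _ 0], rule exI[of _ 1])
    apply (rule exI[of _ 1], rule exI[of _ ?l], rule exI[of _ "?l ^ 2 - D"])
    using L Q p1 p2 c bs(1,2,3) by simp
qed

lemma nb_mu_prop:
  assumes ni: "\<And>m::int. sqrt (real_of_int D) \<noteq> real_of_int m" and c0: "c \<noteq> 0"
  shows "- sqrt (real_of_int D) - real_of_int b < real_of_int (nb_mu D (mat2 a b b c) * c) \<and>
     real_of_int (nb_mu D (mat2 a b b c) * c) < - sqrt (real_of_int D) - real_of_int b + real_of_int \<bar>c\<bar>"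
proof -
  have "nb_mu D (mat2 a b b c) = (THE \<mu>::int. - sqrt (real_of_int D) - real_of_int b < real_of_int (\<mu> * c) \<and>
     real_of_int (\<mu> * c) < - sqrt (real_of_int D) - real_of_int b + real_of_int \<bar>c\<bar>)"
    unfolding nb_mu_def by (simp only: mat2_idx)
  then show ?thesis using theI'[OF mu_unique[OF ni c0, of b]] by simp
qed

lemma cinv_Suc:
  assumes D0: "D > 0" and ns: "\<not> (\<exists>r::int. r ^ 2 = D)" and ci: "cinv D k"
  shows "cinv D (Suc k)"
proof -
  note bs = basics[OF D0 ns]
  let ?s = "sqrt (real_of_int D)"
  obtain p q r t a b c where L: "Lpos D k = mat2 p q r t" and Q: "Qcyc D k = mat2 a b b c"
    and ha: "real_of_int a = phi D p r * psi D p r" and hc: "real_of_int c = phi D q t * psi D q t"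
    and h1: "phi D p r * psi D q t = real_of_int b - ?s"
    and h2: "psi D p r * phi D q t = real_of_int b + ?s"
    and b0: "0 < b" and bs': "real_of_int b < ?s" and a1: "?s - real_of_int b < real_of_int \<bar>a\<bar>"
    and a2: "real_of_int \<bar>a\<bar> < ?s + real_of_int b" and ps: "\<bar>psi D p r\<bar> \<le> 1"
    using ci unfolding cinv_def by blast
  define \<mu> where "\<mu> = nb_mu D (mat2 a b b c)"
  have ac: "real_of_int (a * c) = (real_of_int b - ?s) * (real_of_int b + ?s)"
  proof -
    have "real_of_int (a * c) = (phi D p r * psi D q t) * (psi D p r * phi D q t)"
      using ha hc by (simp add: algebra_simps)
    then show ?thesis using h1 h2 by simp
  qed
  have c0: "c \<noteq> 0"
  proof
    assume "c = 0"
    then have "(real_of_int b - ?s) * (real_of_int b + ?s) = 0" using ac by simp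
    then show False using b0 bs' by simp
  qed
  have a0: "a \<noteq> 0" using a1 bs' by auto
  have mu: "- ?s - real_of_int b < real_of_int (\<mu> * c)"
     "real_of_int (\<mu> * c) < - ?s - real_of_int b + real_of_int \<bar>c\<bar>"
    using nb_mu_prop[OF bs(5) c0, where a=a and b=b] unfolding \<mu>_def by auto
  note rs = red_step[OF b0 bs' a1 a2 ac mu]
  have S: "Scyc D (Suc k) = mat2 0 1 (-1) \<mu>"
    by (simp add: Scyc_Suc Q nb_S_def \<mu>_def)
  have L': "Lpos D (Suc k) = mat2 (- q) (p + q * \<mu>) (- t) (r + t * \<mu>)"
    by (simp add: L S mat2_mult)
  have Q': "Qcyc D (Suc k) = mat2 c (- b - \<mu> * c) (- b - \<mu> * c) (a + 2 * \<mu> * b + \<mu> * \<mu> * c)"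
  proof -
    have "Qcyc D (Suc k) = transpose_mat (mat2 0 1 (-1) \<mu>) * mat2 a b b c * mat2 0 1 (-1) \<mu>"
      by (simp add: Qcyc_Suc Q right_neighbor_def nb_S_def \<mu>_def)
    also have "\<dots> = mat2 c (- b - \<mu> * c) (- b - \<mu> * c) (a + 2 * \<mu> * b + \<mu> * \<mu> * c)"
      by (simp add: mat2_transpose mat2_mult algebra_simps)
    finally show ?thesis .
  qed
  have psiu0: "psi D p r \<noteq> 0" using ha a0 by auto
  have psv: "\<bar>psi D q t\<bar> < \<bar>psi D p r\<bar>"
  proof -
    have "psi D q t * real_of_int a = (phi D p r * psi D q t) * psi D p r"
      unfolding ha by (simp add: algebra_simps)
    then have "psi D q t * real_of_int a = (real_of_int b - ?s) * psi D p r"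
      unfolding h1 .
    then have "\<bar>psi D q t\<bar> * \<bar>real_of_int a\<bar> = (?s - real_of_int b) * \<bar>psi D p r\<bar>"
    proof -
      have "\<bar>real_of_int b - ?s\<bar> = ?s - real_of_int b" using bs' by simp
      then show ?thesis using \<open>psi D q t * real_of_int a = (real_of_int b - ?s) * psi D p r\<close>
        by (metis abs_mult)
    qed
    also have "\<dots> < \<bar>real_of_int a\<bar> * \<bar>psi D p r\<bar>"
      using a1 psiu0 by (intro mult_strict_right_mono) auto
    finally show ?thesis using a0 by (simp add: mult.commute)
  qed
  show ?thesis unfolding cinv_def
  proof (intro exI conjI)
    show "Lpos D (Suc k) = mat2 (- q) (p + q * \<mu>) (- t) (r + t * \<mu>)" by (fact L')
    show "Qcyc D (Suc k) = mat2 c (- b - \<mu> * c) (- b - \<mu> * c) (a + 2 * \<mu> * b + \<mu> * \<mu> * c)" by (fact Q')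
    show "real_of_int c = phi D (- q) (- t) * psi D (- q) (- t)" using hc by (simp add: phi_neg psi_neg)
    show "real_of_int (a + 2 * \<mu> * b + \<mu> * \<mu> * c) = phi D (p + q * \<mu>) (r + t * \<mu>) * psi D (p + q * \<mu>) (r + t * \<mu>)"
    proof -
      have "phi D (p + q * \<mu>) (r + t * \<mu>) * psi D (p + q * \<mu>) (r + t * \<mu>)
        = phi D p r * psi D p r + real_of_int \<mu> * (phi D p r * psi D q t) + real_of_int \<mu> * (psi D p r * phi D q t)
          + real_of_int \<mu> * real_of_int \<mu> * (phi D q t * psi D q t)"
        unfolding phi_lin psi_lin by (simp add: algebra_simps)
      also have "\<dots> = real_of_int (a + 2 * \<mu> * b + \<mu> * \<mu> * c)"
        unfolding h1 h2 ha[symmetric] hc[symmetric] by (simp add: algebra_simps)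
      finally show ?thesis by simp
    qed
    show "phi D (- q) (- t) * psi D (p + q * \<mu>) (r + t * \<mu>) = real_of_int (- b - \<mu> * c) - ?s"
    proof -
      have "phi D (- q) (- t) * psi D (p + q * \<mu>) (r + t * \<mu>) = - (psi D p r * phi D q t) - real_of_int \<mu> * (phi D q t * psi D q t)"
        unfolding phi_neg phi_lin psi_lin by (simp add: algebra_simps)
      also have "\<dots> = real_of_int (- b - \<mu> * c) - ?s" unfolding h2 hc[symmetric] by simp
      finally show ?thesis .
    qed
    show "psi D (- q) (- t) * phi D (p + q * \<mu>) (r + t * \<mu>) = real_of_int (- b - \<mu> * c) + ?s"
    proof -
      have "psi D (- q) (- t) * phi D (p + q * \<mu>) (r + t * \<mu>) = - (phi D p r * psi D q t) - real_of_int \<mu> * (phi D q t * psi D q t)"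
        unfolding psi_neg phi_lin psi_lin by (simp add: algebra_simps)
      also have "\<dots> = real_of_int (- b - \<mu> * c) + ?s" unfolding h1 hc[symmetric] by simp
      finally show ?thesis .
    qed
    show "0 < - b - \<mu> * c" by (fact rs(1))
    show "real_of_int (- b - \<mu> * c) < ?s" by (fact rs(2))
    show "?s - real_of_int (- b - \<mu> * c) < real_of_int \<bar>c\<bar>" by (fact rs(3))
    show "real_of_int \<bar>c\<bar> < ?s + real_of_int (- b - \<mu> * c)" by (fact rs(4))
    show "\<bar>psi D (- q) (- t)\<bar> \<le> 1" using psv ps by (simp add: psi_neg)
  qed
qed

lemma cinv_all: "D > 0 \<Longrightarrow> \<not> (\<exists>r::int. r ^ 2 = D) \<Longrightarrow> cinv D k"
  by (induction k) (auto intro: cinv_0 cinv_Suc)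



lemma coord_bound:
  assumes D0: "D > 0" and ns: "\<not> (\<exists>r::int. r ^ 2 = D)"
    and h1: "\<bar>phi D x1 x2\<bar> \<le> P" and h2: "\<bar>psi D x1 x2\<bar> \<le> 1"
  shows "real_of_int \<bar>x1\<bar> \<le> 1 + P / (2 * sqrt (real_of_int D))"
    "real_of_int \<bar>x2\<bar> \<le> 1 + P / (2 * sqrt (real_of_int D))"
proof -
  note bs = basics[OF D0 ns]
  let ?s = "sqrt (real_of_int D)" and ?l = "real_of_int (isqrt D)"
  have s1: "?s \<ge> 1" using bs(1,2) by linarith
  have sp: "2 * ?s > 0" using s1 by simp
  have ex: "2 * ?s * (1 + P / (2 * ?s)) = 2 * ?s + P" using sp by (simp add: field_simps)
  have e2: "2 * ?s * real_of_int x2 = phi D x1 x2 - psi D x1 x2"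
    by (simp add: phi_def psi_def algebra_simps)
  have e1: "2 * ?s * real_of_int x1 = (?l + ?s) * psi D x1 x2 - (?l - ?s) * phi D x1 x2"
    by (simp add: phi_def psi_def algebra_simps)
  have "2 * ?s * \<bar>real_of_int x2\<bar> \<le> P + 1"
  proof -
    have "2 * ?s * \<bar>real_of_int x2\<bar> = \<bar>phi D x1 x2 - psi D x1 x2\<bar>"
      using e2 sp by (metis abs_mult abs_of_pos)
    then show ?thesis using h1 h2 by linarith
  qed
  also have "P + 1 \<le> 2 * ?s * (1 + P / (2 * ?s))"
    unfolding ex using s1 by linarith
  finally show "real_of_int \<bar>x2\<bar> \<le> 1 + P / (2 * ?s)"
    using sp by (simp add: mult_le_cancel_left_pos)
  have "2 * ?s * \<bar>real_of_int x1\<bar> \<le> (?l + ?s) * 1 + 1 * P"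
  proof -
    have "2 * ?s * \<bar>real_of_int x1\<bar> = \<bar>(?l + ?s) * psi D x1 x2 - (?l - ?s) * phi D x1 x2\<bar>"
      using e1 sp by (metis abs_mult abs_of_pos)
    also have "\<dots> \<le> \<bar>?l + ?s\<bar> * \<bar>psi D x1 x2\<bar> + \<bar>?l - ?s\<bar> * \<bar>phi D x1 x2\<bar>"
      by (metis abs_mult abs_triangle_ineq4)
    also have "\<dots> \<le> (?l + ?s) * 1 + 1 * P"
    proof (rule add_mono)
      show "\<bar>?l + ?s\<bar> * \<bar>psi D x1 x2\<bar> \<le> (?l + ?s) * 1"
        using h2 bs(1) s1 by (intro mult_mono) auto
      show "\<bar>?l - ?s\<bar> * \<bar>phi D x1 x2\<bar> \<le> 1 * P"
        using h1 bs(2,3) by (intro mult_mono) auto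
    qed
    finally show ?thesis .
  qed
  also have "(?l + ?s) * 1 + 1 * P \<le> 2 * ?s * (1 + P / (2 * ?s))"
    unfolding ex using bs(2) by simp
  finally show "real_of_int \<bar>x1\<bar> \<le> 1 + P / (2 * ?s)"
    using sp by (simp add: mult_le_cancel_left_pos)
qed

definition good :: "int \<Rightarrow> int mat \<Rightarrow> bool" where
  "good D S \<longleftrightarrow> S \<in> carrier_mat 2 2 \<and>
     sqrt (real_of_int D) < \<bar>phi D (S$$(0,1)) (S$$(1,1))\<bar> \<and> \<bar>psi D (S$$(0,1)) (S$$(1,1))\<bar> < 1 \<and>
     real_of_int (mnorm S) \<le> 1 + \<bar>phi D (S$$(0,1)) (S$$(1,1))\<bar> / (2 * sqrt (real_of_int D))"

lemma good_uminus: "good D S \<Longrightarrow> good D (- S)"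
proof -
  assume g: "good D S"
  then have c: "S \<in> carrier_mat 2 2" unfolding good_def by blast
  then have "(- S) $$ (0,1) = - S $$ (0,1)" "(- S) $$ (1,1) = - S $$ (1,1)" by auto
  moreover have "- S \<in> carrier_mat 2 2" using c by simp
  ultimately show ?thesis using g unfolding good_def by (simp add: phi_neg psi_neg mnorm_uminus)
qed

lemma mnorm_mat2_le: "\<bar>a\<bar> \<le> x \<Longrightarrow> \<bar>b\<bar> \<le> x \<Longrightarrow> \<bar>c\<bar> \<le> x \<Longrightarrow> \<bar>d\<bar> \<le> x \<Longrightarrow> mnorm (mat2 a b c d) \<le> x"
proof (rule mnorm_le)
  fix i j assume "\<bar>a\<bar> \<le> x" "\<bar>b\<bar> \<le> x" "\<bar>c\<bar> \<le> x" "\<bar>d\<bar> \<le> x"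
    "i < dim_row (mat2 a b c d)" "j < dim_col (mat2 a b c d)"
  moreover then have "i = 0 \<or> i = 1" "j = 0 \<or> j = 1" by auto
  ultimately show "\<bar>mat2 a b c d $$ (i, j)\<bar> \<le> x" by (auto simp only: mat2_idx)
qed auto

lemma good_L:
  assumes D0: "D > 0" and ns: "\<not> (\<exists>r::int. r ^ 2 = D)"
  shows "good D (Lpos D k)"
proof -
  note bs = basics[OF D0 ns]
  let ?s = "sqrt (real_of_int D)"
  obtain p q r t a b c where L: "Lpos D k = mat2 p q r t"
    and ha: "real_of_int a = phi D p r * psi D p r" and hc: "real_of_int c = phi D q t * psi D q t"
    and h1: "phi D p r * psi D q t = real_of_int b - ?s"
    and h2: "psi D p r * phi D q t = real_of_int b + ?s"
    and b0: "0 < b" and bs': "real_of_int b < ?s" and a1: "?s - real_of_int b < real_of_int \<bar>a\<bar>"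
    and a2: "real_of_int \<bar>a\<bar> < ?s + real_of_int b" and ps: "\<bar>psi D p r\<bar> \<le> 1"
    using cinv_all[OF D0 ns, of k] unfolding cinv_def by blast
  have a0: "a \<noteq> 0" using a1 bs' by auto
  have psiu0: "psi D p r \<noteq> 0" using ha a0 by auto
  have psv: "\<bar>psi D q t\<bar> < \<bar>psi D p r\<bar>"
  proof -
    have "psi D q t * real_of_int a = (phi D p r * psi D q t) * psi D p r"
      unfolding ha by (simp add: algebra_simps)
    then have e: "psi D q t * real_of_int a = (real_of_int b - ?s) * psi D p r"
      unfolding h1 .
    have "\<bar>psi D q t\<bar> * \<bar>real_of_int a\<bar> = (?s - real_of_int b) * \<bar>psi D p r\<bar>"
    proof -
      have "\<bar>real_of_int b - ?s\<bar> = ?s - real_of_int b" using bs' by simp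
      then show ?thesis using e by (metis abs_mult)
    qed
    also have "\<dots> < \<bar>real_of_int a\<bar> * \<bar>psi D p r\<bar>"
      using a1 psiu0 by (intro mult_strict_right_mono) auto
    finally show ?thesis using a0 by (simp add: mult.commute)
  qed
  have e2: "\<bar>psi D p r\<bar> * \<bar>phi D q t\<bar> = real_of_int b + ?s"
    using h2 b0 bs' by (metis abs_mult abs_of_pos add_pos_pos of_int_0_less_iff less_trans)
  have phv: "?s < \<bar>phi D q t\<bar>"
  proof -
    have "\<bar>psi D p r\<bar> * \<bar>phi D q t\<bar> \<le> 1 * \<bar>phi D q t\<bar>" using ps by (intro mult_right_mono) auto
    then show ?thesis using e2 b0 by simp
  qed
  have phu: "\<bar>phi D p r\<bar> \<le> \<bar>phi D q t\<bar>"
  proof -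
    have "\<bar>psi D p r\<bar> * \<bar>phi D p r\<bar> = \<bar>real_of_int a\<bar>" using ha by (simp add: abs_mult mult.commute)
    also have "\<dots> < \<bar>psi D p r\<bar> * \<bar>phi D q t\<bar>" using e2 a2 by simp
    finally show ?thesis using psiu0 by simp
  qed
  let ?P = "\<bar>phi D q t\<bar>"
  have cu: "real_of_int \<bar>p\<bar> \<le> 1 + ?P / (2 * ?s)" "real_of_int \<bar>r\<bar> \<le> 1 + ?P / (2 * ?s)"
    using coord_bound[OF D0 ns phu ps] by auto
  have cv: "real_of_int \<bar>q\<bar> \<le> 1 + ?P / (2 * ?s)" "real_of_int \<bar>t\<bar> \<le> 1 + ?P / (2 * ?s)"
    using coord_bound[OF D0 ns order_refl, of q t] psv ps by auto
  have mn: "real_of_int (mnorm (mat2 p q r t)) \<le> 1 + ?P / (2 * ?s)"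
  proof -
    let ?m = "max (max \<bar>p\<bar> \<bar>q\<bar>) (max \<bar>r\<bar> \<bar>t\<bar>)"
    have "mnorm (mat2 p q r t) \<le> ?m" by (rule mnorm_mat2_le) (simp_all add: le_max_iff_disj)
    moreover have "real_of_int ?m \<le> 1 + ?P / (2 * ?s)" using cu cv by (simp add: of_int_max)
    ultimately show ?thesis by linarith
  qed
  show ?thesis unfolding good_def L
    using mn phv psv ps by (simp only: mat2_idx mat2_carrier) auto
qed



lemma alg_lower:
  fixes s P1 P2 m1 m2 Z :: real
  assumes s: "s \<ge> 7/5" and p1: "P1 > s" and p2: "P2 > s"
    and h1: "m1 \<le> 1 + P1 / (2 * s)" and h2: "m2 \<le> 1 + P2 / (2 * s)" and m1: "0 \<le> m1" and m2: "0 \<le> m2"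
    and z: "P1 * P2 - 1 \<le> 4 * s * Z"
  shows "m1 * m2 \<le> 16 * Z"
proof -
  have sp: "s > 0" using s by simp
  have a1: "1 + P1 / (2 * s) \<le> 3 * P1 / (2 * s)" using sp p1 by (simp add: field_simps)
  have a2: "1 + P2 / (2 * s) \<le> 3 * P2 / (2 * s)" using sp p2 by (simp add: field_simps)
  have "m1 * m2 \<le> (3 * P1 / (2 * s)) * (3 * P2 / (2 * s))"
    using h1 h2 a1 a2 m1 m2 by (intro mult_mono) (auto intro: order_trans)
  also have "\<dots> = 9 * (P1 * P2) / (4 * (s * s))" by (simp add: field_simps)
  also have "\<dots> \<le> 16 * s * (P1 * P2 - 1) / (4 * (s * s))"
  proof (rule divide_right_mono)
    have X: "P1 * P2 \<ge> s * s" using p1 p2 sp by (intro mult_mono) auto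
    have c: "16 * s - 9 > 0" using s by simp
    have "P1 * P2 * (16 * s - 9) \<ge> (s * s) * (16 * s - 9)" using X c by (intro mult_right_mono) auto
    moreover have "s * (16 * s - 9) \<ge> 7/5 * (16 * 7/5 - 9)" using s by (intro mult_mono) auto
    then have "s * (s * (16 * s - 9)) \<ge> s * 16" using sp by (intro mult_left_mono) auto
    ultimately have "P1 * P2 * (16 * s - 9) \<ge> 16 * s" by (simp add: algebra_simps)
    then show "9 * (P1 * P2) \<le> 16 * s * (P1 * P2 - 1)" by (simp add: algebra_simps)
  qed (use sp in simp)
  also have "\<dots> = 4 * (P1 * P2 - 1) / s" using sp by (simp add: field_simps)
  also have "\<dots> \<le> 4 * (4 * s * Z) / s" using z sp by (intro divide_right_mono) auto
  also have "\<dots> = 16 * Z" using sp by simp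
  finally show ?thesis .
qed

lemma mnorm_nonneg: "i < dim_row M \<Longrightarrow> j < dim_col M \<Longrightarrow> 0 \<le> mnorm M"
  using mnorm_ge[of i M j] by (meson abs_ge_zero order_trans)

lemma entry_prod_le:
  assumes "i < dim_row A" "j < dim_col A" "k < dim_row C" "l < dim_col C"
  shows "\<bar>A $$ (i,j) * C $$ (k,l)\<bar> \<le> mnorm A * mnorm C"
  unfolding abs_mult
  by (rule mult_mono[OF mnorm_ge[OF assms(1,2)] mnorm_ge[OF assms(3,4)] mnorm_nonneg[OF assms(1,2)] abs_ge_zero])

lemma lower:
  assumes D0: "D > 0" and ns: "\<not> (\<exists>r::int. r ^ 2 = D)"
    and g1: "good D S1" and g2: "good D S2" and c3: "S3 \<in> carrier_mat 2 2" and cB: "B \<in> carrier_mat 2 4"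
    and eq: "S3 * B = B0 D * kron S1 S2"
  shows "real_of_int (mnorm S1) * real_of_int (mnorm S2) \<le> 16 * (real_of_int (mnorm S3) * real_of_int (mnorm B))"
proof -
  note bs = basics[OF D0 ns]
  have "0 \<le> D" using D0 by linarith
  let ?s = "sqrt (real_of_int D)" and ?l = "isqrt D"
  have c1: "S1 \<in> carrier_mat 2 2" and c2: "S2 \<in> carrier_mat 2 2" using g1 g2 unfolding good_def by auto
  have cK: "kron S1 S2 \<in> carrier_mat 4 4" using c1 c2 by (rule kron_dims)
  let ?q1 = "S1 $$ (0,1)" and ?t1 = "S1 $$ (1,1)" and ?q2 = "S2 $$ (0,1)" and ?t2 = "S2 $$ (1,1)"
  have M13: "(S3 * B) $$ (1,3) = ?q1 * ?t2 + ?t1 * ?q2 + 2 * ?l * (?t1 * ?t2)"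
  proof -
    have "(S3 * B) $$ (1,3) = kron S1 S2 $$ (1,3) + kron S1 S2 $$ (2,3) + 2 * ?l * kron S1 S2 $$ (3,3)"
      unfolding eq by (rule B0_M(2)[OF cK]) simp
    moreover have "kron S1 S2 $$ (1,3) = ?q1 * ?t2" using kron_idx[OF c1 c2, of 1 3] by simp
    moreover have "kron S1 S2 $$ (2,3) = ?t1 * ?q2" using kron_idx[OF c1 c2, of 2 3] by simp
    moreover have "kron S1 S2 $$ (3,3) = ?t1 * ?t2" using kron_idx[OF c1 c2, of 3 3] by simp
    ultimately show ?thesis by simp
  qed
  have key: "2 * ?s * real_of_int ((S3 * B) $$ (1,3)) = phi D ?q1 ?t1 * phi D ?q2 ?t2 - psi D ?q1 ?t1 * psi D ?q2 ?t2"
    unfolding M13 by (simp add: phi_def psi_def algebra_simps)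
  have M13b: "\<bar>(S3 * B) $$ (1,3)\<bar> \<le> 2 * (mnorm S3 * mnorm B)"
  proof -
    have "(S3 * B) $$ (1,3) = S3$$(1,0)*B$$(0,3) + S3$$(1,1)*B$$(1,3)" by (rule mult24[OF c3 cB]) auto
    moreover have "\<bar>S3$$(1,0)*B$$(0,3)\<bar> \<le> mnorm S3 * mnorm B" "\<bar>S3$$(1,1)*B$$(1,3)\<bar> \<le> mnorm S3 * mnorm B"
      using c3 cB by (intro entry_prod_le; simp)+
    ultimately show ?thesis by (smt (verit) abs_triangle_ineq)
  qed
  let ?P1 = "\<bar>phi D ?q1 ?t1\<bar>" and ?P2 = "\<bar>phi D ?q2 ?t2\<bar>"
  have gg1: "?s < ?P1" "\<bar>psi D ?q1 ?t1\<bar> < 1" "real_of_int (mnorm S1) \<le> 1 + ?P1 / (2 * ?s)"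
    using g1 unfolding good_def by auto
  have gg2: "?s < ?P2" "\<bar>psi D ?q2 ?t2\<bar> < 1" "real_of_int (mnorm S2) \<le> 1 + ?P2 / (2 * ?s)"
    using g2 unfolding good_def by auto
  have s75: "?s \<ge> 7/5"
  proof -
    have d2: "real_of_int D \<ge> 2" using bs(6) by simp
    have "(7/5::real)^2 \<le> 2" by (simp add: power2_eq_square)
    also have "\<dots> \<le> (?s)^2" using d2 \<open>0 \<le> D\<close> by simp
    finally have "(7/5)^2 \<le> (?s)^2" .
    then show ?thesis by (rule power2_le_imp_le) (simp add: \<open>0 \<le> D\<close>)
  qed
  have pp: "\<bar>psi D ?q1 ?t1 * psi D ?q2 ?t2\<bar> \<le> 1"
    unfolding abs_mult by (rule mult_le_one[OF less_imp_le[OF gg1(2)] abs_ge_zero less_imp_le[OF gg2(2)]])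
  have "?P1 * ?P2 - 1 \<le> \<bar>2 * ?s * real_of_int ((S3 * B) $$ (1,3))\<bar>"
  proof -
    have "?P1 * ?P2 - 1 \<le> \<bar>phi D ?q1 ?t1 * phi D ?q2 ?t2\<bar> - \<bar>psi D ?q1 ?t1 * psi D ?q2 ?t2\<bar>"
      using pp unfolding abs_mult by linarith
    also have "\<dots> \<le> \<bar>phi D ?q1 ?t1 * phi D ?q2 ?t2 - psi D ?q1 ?t1 * psi D ?q2 ?t2\<bar>"
      by (rule abs_triangle_ineq2)
    finally show ?thesis unfolding key .
  qed
  also have "\<dots> = 2 * ?s * \<bar>real_of_int ((S3 * B) $$ (1,3))\<bar>" using \<open>0 \<le> D\<close> by (simp add: abs_mult)
  also have "\<dots> \<le> 2 * ?s * (2 * (real_of_int (mnorm S3) * real_of_int (mnorm B)))"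
  proof (rule mult_left_mono)
    have "real_of_int \<bar>(S3 * B) $$ (1,3)\<bar> \<le> real_of_int (2 * (mnorm S3 * mnorm B))"
      using M13b by (simp only: of_int_le_iff)
    then show "\<bar>real_of_int ((S3 * B) $$ (1,3))\<bar> \<le> 2 * (real_of_int (mnorm S3) * real_of_int (mnorm B))"
      by simp
  qed (use \<open>0 \<le> D\<close> in simp)
  finally have z: "?P1 * ?P2 - 1 \<le> 4 * ?s * (real_of_int (mnorm S3) * real_of_int (mnorm B))"
    by simp
  have m1: "0 \<le> real_of_int (mnorm S1)" using mnorm_nonneg[of 0 S1 0] c1 by simp
  have m2: "0 \<le> real_of_int (mnorm S2)" using mnorm_nonneg[of 0 S2 0] c2 by simp
  show ?thesis by (rule alg_lower[OF s75 gg1(1) gg2(1) gg1(3) gg2(3) m1 m2 z])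
qed



lemma upper:
  assumes D0: "D > 0" and ns: "\<not> (\<exists>r::int. r ^ 2 = D)"
    and c1: "S1 \<in> carrier_mat 2 2" and c2: "S2 \<in> carrier_mat 2 2"
    and c3: "S3 \<in> carrier_mat 2 2" and cB: "B \<in> carrier_mat 2 4"
    and eq: "S3 * B = B0 D * kron S1 S2"
    and ik: "i < 4" "k < 4" and nz: "minor24 B i k \<noteq> 0"
  shows "mnorm S3 \<le> (4 * isqrt D + 4) * (mnorm S1 * mnorm S2) * mnorm B"
proof -
  note bs = basics[OF D0 ns]
  let ?l = "isqrt D" and ?m = "mnorm S1 * mnorm S2" and ?K = "kron S1 S2"
  have cK: "?K \<in> carrier_mat 4 4" using c1 c2 by (rule kron_dims)
  have m0: "0 \<le> ?m" using mnorm_nonneg[of 0 S1 0] mnorm_nonneg[of 0 S2 0] c1 c2 by simp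
  have mB0: "0 \<le> mnorm B" using mnorm_nonneg[of 0 B 0] cB by simp
  have Kb: "\<bar>?K $$ (a, j)\<bar> \<le> ?m" if "a < 4" "j < 4" for a j
  proof -
    have "?K $$ (a, j) = S1 $$ (a div 2, j div 2) * S2 $$ (a mod 2, j mod 2)"
      by (rule kron_idx[OF c1 c2 that])
    moreover have "\<bar>S1 $$ (a div 2, j div 2) * S2 $$ (a mod 2, j mod 2)\<bar> \<le> ?m"
      using c1 c2 that by (intro entry_prod_le) auto
    ultimately show ?thesis by simp
  qed
  have Mb: "\<bar>(S3 * B) $$ (r, j)\<bar> \<le> (2 * ?l + 2) * ?m" if "r < 2" "j < 4" for r j
  proof -
    have "r = 0 \<or> r = 1" using that by auto
    then show ?thesis
    proof
      assume r: "r = 0"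
      have "\<bar>(D - ?l^2) * ?K $$ (3, j)\<bar> \<le> (2 * ?l) * ?m"
        unfolding abs_mult using bs(7,8) Kb[of 3 j] that by (intro mult_mono) auto
      then show ?thesis unfolding r eq B0_M(1)[OF cK that(2)] using Kb[of 0 j] that by (simp add: algebra_simps; linarith)
    next
      assume r: "r = 1"
      have "\<bar>2 * ?l * ?K $$ (3, j)\<bar> \<le> (2 * ?l) * ?m"
        unfolding abs_mult using bs(1) Kb[of 3 j] that by (intro mult_mono) auto
      then show ?thesis unfolding r eq B0_M(2)[OF cK that(2)] using Kb[of 1 j] Kb[of 2 j] that
        by (simp add: algebra_simps; linarith)
    qed
  qed
  let ?d = "minor24 B i k"
  have dabs: "\<bar>x\<bar> \<le> \<bar>?d * x\<bar>" for x :: int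
    using nz by (simp add: abs_mult) (metis abs_ge_zero mult_le_cancel_right1 zero_less_abs_iff abs_ge_self int_one_le_iff_zero_less mult_right_mono linorder_not_le)
  have S3b: "\<bar>S3 $$ (r, c)\<bar> \<le> (4 * ?l + 4) * ?m * mnorm B" if "r < 2" "c < 2" for r c
  proof -
    have Mi: "(S3 * B) $$ (r, i) = S3$$(r,0)*B$$(0,i) + S3$$(r,1)*B$$(1,i)" by (rule mult24[OF c3 cB that(1) ik(1)])
    have Mk: "(S3 * B) $$ (r, k) = S3$$(r,0)*B$$(0,k) + S3$$(r,1)*B$$(1,k)" by (rule mult24[OF c3 cB that(1) ik(2)])
    have e0: "?d * S3 $$ (r,0) = (S3 * B) $$ (r, i) * B $$ (1,k) - (S3 * B) $$ (r, k) * B $$ (1,i)"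
      unfolding Mi Mk minor24_def by (simp add: algebra_simps)
    have e1: "?d * S3 $$ (r,1) = B $$ (0,i) * (S3 * B) $$ (r, k) - B $$ (0,k) * (S3 * B) $$ (r, i)"
      unfolding Mi Mk minor24_def by (simp add: algebra_simps)
    have bnd: "\<bar>X * Y - Z * W\<bar> \<le> (4 * ?l + 4) * ?m * mnorm B"
      if "\<bar>X\<bar> \<le> (2 * ?l + 2) * ?m" "\<bar>Z\<bar> \<le> (2 * ?l + 2) * ?m" "\<bar>Y\<bar> \<le> mnorm B" "\<bar>W\<bar> \<le> mnorm B" for X Y Z W :: int
    proof -
      have "\<bar>X * Y\<bar> \<le> (2 * ?l + 2) * ?m * mnorm B" unfolding abs_mult
        using that bs(1) m0 by (intro mult_mono) auto
      moreover have "\<bar>Z * W\<bar> \<le> (2 * ?l + 2) * ?m * mnorm B" unfolding abs_mult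
        using that bs(1) m0 by (intro mult_mono) auto
      ultimately show ?thesis by (simp add: algebra_simps; linarith)
    qed
    have bi: "\<bar>B $$ (a, b)\<bar> \<le> mnorm B" if "a < 2" "b < 4" for a b using mnorm_ge[of a B b] cB that by simp
    have "c = 0 \<or> c = 1" using that by auto
    then show ?thesis
    proof
      assume "c = 0"
      then show ?thesis using dabs[of "S3 $$ (r,0)"] e0 bnd[OF Mb[OF that(1) ik(1)] Mb[OF that(1) ik(2)] bi[of 1 k] bi[of 1 i]] ik
        by simp
    next
      assume "c = 1"
      then show ?thesis using dabs[of "S3 $$ (r,1)"] e1 bnd[OF Mb[OF that(1) ik(2)] Mb[OF that(1) ik(1)] bi[of 0 i] bi[of 0 k]] ik
        by (simp add: mult.commute)
    qed
  qed
  show ?thesis by (rule mnorm_le) (use c3 S3b in auto)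
qed



lemma log2_4: "log 2 (4::real) = 2"
  using log_pow_cancel[of "2::real" 2] by simp
lemma log2_8: "log 2 (8::real) = 3"
  using log_pow_cancel[of "2::real" 3] by simp
lemma log2_16: "log 2 (16::real) = 4"
  using log_pow_cancel[of "2::real" 4] by simp

lemma lg_ge1: "x \<ge> 1 \<Longrightarrow> lg x = (if x \<ge> 4 then log 2 x else 2)"
  unfolding lg_def by simp

lemma lg_ge2: "x \<ge> 1 \<Longrightarrow> lg x \<ge> 2"
proof -
  assume x: "x \<ge> 1"
  show ?thesis
  proof (cases "x \<ge> 4")
    case True
    then have "log 2 4 \<le> log 2 x" by simp
    then show ?thesis using True x by (simp add: lg_ge1 log2_4)
  qed (use x in \<open>simp add: lg_ge1\<close>)
qed

lemma log_le_lg: "x \<ge> 1 \<Longrightarrow> log 2 x \<le> lg x"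
proof -
  assume x: "x \<ge> 1"
  show ?thesis
  proof (cases "x \<ge> 4")
    case False
    then have "log 2 x \<le> log 2 4" using x by simp
    then show ?thesis using False x by (simp add: lg_ge1 log2_4)
  qed (use x in \<open>simp add: lg_ge1\<close>)
qed

lemma lg_mono: "1 \<le> x \<Longrightarrow> x \<le> y \<Longrightarrow> lg x \<le> lg y"
proof -
  assume x: "1 \<le> x" and xy: "x \<le> y"
  show ?thesis
  proof (cases "x \<ge> 4")
    case True
    then have "log 2 x \<le> log 2 y" using xy by simp
    then show ?thesis using True x xy by (simp add: lg_ge1)
  next
    case False
    then have "lg x = 2" using x by (simp add: lg_ge1)
    moreover have "lg y \<ge> 2" using x xy by (intro lg_ge2) simp
    ultimately show ?thesis by simp
  qed
qed

lemma lg_mult: "1 \<le> x \<Longrightarrow> 1 \<le> y \<Longrightarrow> lg (x * y) \<le> lg x + lg y"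
proof -
  assume x: "1 \<le> x" and y: "1 \<le> y"
  have xy: "1 \<le> x * y" using mult_mono[of 1 x 1 y] x y by simp
  show ?thesis
  proof (cases "x * y \<ge> 4")
    case True
    have "lg (x * y) = log 2 x + log 2 y" using True x y by (simp add: lg_ge1 log_mult)
    then show ?thesis using log_le_lg[OF x] log_le_lg[OF y] by simp
  next
    case False
    then have "lg (x * y) = 2" using xy by (simp add: lg_ge1)
    then show ?thesis using lg_ge2[OF x] lg_ge2[OF y] by simp
  qed
qed

lemma lg_add: "1 \<le> x \<Longrightarrow> 1 \<le> y \<Longrightarrow> lg x + lg y \<le> lg (x * y) + 2"
proof -
  assume x: "1 \<le> x" and y: "1 \<le> y"
  show ?thesis
  proof (cases "x \<ge> 4 \<and> y \<ge> 4")
    case True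
    have "x * y \<ge> 4 * 1" using True by (intro mult_mono) auto
    then have "lg (x * y) = log 2 x + log 2 y" using True x y by (simp add: lg_ge1 log_mult)
    then show ?thesis using True x y by (simp add: lg_ge1)
  next
    case False
    then have "\<not> x \<ge> 4 \<or> \<not> y \<ge> 4" by simp
    then show ?thesis
    proof
      assume "\<not> x \<ge> 4"
      then have "lg x = 2" using x by (simp add: lg_ge1)
      moreover have "lg y \<le> lg (x * y)" using x y by (intro lg_mono) (auto simp: mult_le_cancel_right1)
      ultimately show ?thesis by simp
    next
      assume "\<not> y \<ge> 4"
      then have "lg y = 2" using y by (simp add: lg_ge1)
      moreover have "lg x \<le> lg (x * y)" using x y by (intro lg_mono) (auto simp: mult_le_cancel_left1)
      ultimately show ?thesis by simp
    qed
  qed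
qed

lemma good_mnorm1:
  assumes "D > 0" and g: "good D S" shows "1 \<le> mnorm S"
proof -
  have c: "S \<in> carrier_mat 2 2" and ph: "sqrt (real_of_int D) < \<bar>phi D (S$$(0,1)) (S$$(1,1))\<bar>"
    using g unfolding good_def by auto
  have "S$$(0,1) \<noteq> 0 \<or> S$$(1,1) \<noteq> 0"
  proof (rule ccontr)
    assume "\<not> ?thesis"
    then have "phi D (S$$(0,1)) (S$$(1,1)) = 0" by (simp add: phi_def)
    then show False using ph assms(1) by simp
  qed
  then show ?thesis
  proof
    assume "S$$(0,1) \<noteq> 0"
    then show ?thesis using mnorm_ge[of 0 S 1] c by simp
  next
    assume "S$$(1,1) \<noteq> 0"
    then show ?thesis using mnorm_ge[of 1 S 1] c by simp
  qed
qed

lemma good_pm: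
  assumes "D > 0" "\<not> (\<exists>r::int. r ^ 2 = D)" and "S = Lcyc D (int k) \<or> S = - Lcyc D (int k)"
  shows "good D S" "mnorm S = mnorm (Lcyc D (int k))"
proof -
  have L: "Lcyc D (int k) = Lpos D k" by (simp add: Lcyc_def)
  show "good D S" using assms(3) good_L[OF assms(1,2), of k] good_uminus unfolding L by auto
  show "mnorm S = mnorm (Lcyc D (int k))" using assms(3) mnorm_uminus by auto
qed



theorem lemma6p3:
  fixes D :: int and Q1 Q2 Q3 S1 S2 S3 B :: "int mat"
    and k1 k2 :: nat and k3 :: int and c1 :: real
  assumes "D > 0" and "\<not> (\<exists>r::int. r ^ 2 = D)"
    and "Q1 \<in> principal_cycle D" "Q2 \<in> principal_cycle D" "Q3 \<in> principal_cycle D"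
    and "equiv_via (Itilde D) Q1 S1" "S1 = Lcyc D (int k1) \<or> S1 = - Lcyc D (int k1)"
    and "equiv_via (Itilde D) Q2 S2" "S2 = Lcyc D (int k2) \<or> S2 = - Lcyc D (int k2)"
    and "composes_via Q1 Q2 Q3 B"
    and "lg (real_of_int (mnorm B)) \<le> c1 * lg (real_of_int D)"
    and "S3 \<in> carrier_mat 2 2" "S3 * B = B0 D * kron S1 S2"
    and "S3 = Lcyc D k3 \<or> S3 = - Lcyc D k3"
  shows "\<bar>lg (real_of_int (mnorm (Lcyc D k3)))
          - lg (real_of_int (mnorm (Lcyc D (int k1))))
          - lg (real_of_int (mnorm (Lcyc D (int k2))))\<bar>
         \<le> (c1 + 4) * lg (real_of_int D)"
proof -
  note D0 = assms(1) and ns = assms(2)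
  note bs = basics[OF D0 ns]
  have cB: "B \<in> carrier_mat 2 4" and gc: "Gcd ((\<lambda>(i,k). minor24 B i k) ` {(i,k). i < k \<and> k < 4}) = 1"
    using assms(10) unfolding composes_via_def by auto
  have "\<not> ((\<lambda>(i,k). minor24 B i k) ` {(i,k). i < k \<and> k < 4} \<subseteq> {0})"
  proof
    assume "(\<lambda>(i,k). minor24 B i k) ` {(i,k). i < k \<and> k < 4} \<subseteq> {0}"
    then have "Gcd ((\<lambda>(i,k). minor24 B i k) ` {(i,k). i < k \<and> k < 4}) = 0" by (simp only: Gcd_0_iff)
    then show False using gc by simp
  qed
  then obtain i k where ik: "i < k" "k < 4" and nz: "minor24 B i k \<noteq> 0" by auto
  have g1: "good D S1" and e1: "mnorm S1 = mnorm (Lcyc D (int k1))" using good_pm[OF D0 ns assms(7)] by auto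
  have g2: "good D S2" and e2: "mnorm S2 = mnorm (Lcyc D (int k2))" using good_pm[OF D0 ns assms(9)] by auto
  have e3: "mnorm S3 = mnorm (Lcyc D k3)" using assms(14) mnorm_uminus by auto
  have c1: "S1 \<in> carrier_mat 2 2" and c2: "S2 \<in> carrier_mat 2 2" using g1 g2 unfolding good_def by auto
  note c3 = assms(12) and eq = assms(13)
  have low: "real_of_int (mnorm S1) * real_of_int (mnorm S2) \<le> 16 * (real_of_int (mnorm S3) * real_of_int (mnorm B))"
    by (rule lower[OF D0 ns g1 g2 c3 cB eq])
  have up: "mnorm S3 \<le> (4 * isqrt D + 4) * (mnorm S1 * mnorm S2) * mnorm B"
    by (rule upper[OF D0 ns c1 c2 c3 cB eq _ ik(2) nz]) (use ik in simp)
  define x1 where "x1 = real_of_int (mnorm S1)"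
  define x2 where "x2 = real_of_int (mnorm S2)"
  define x3 where "x3 = real_of_int (mnorm S3)"
  define xB where "xB = real_of_int (mnorm B)"
  define d where "d = real_of_int D"
  have x1: "1 \<le> x1" unfolding x1_def using good_mnorm1[OF D0 g1] by simp
  have x2: "1 \<le> x2" unfolding x2_def using good_mnorm1[OF D0 g2] by simp
  have x30: "0 \<le> x3" unfolding x3_def using mnorm_nonneg[of 0 S3 0] c3 by simp
  have xB0: "0 \<le> xB" unfolding xB_def using mnorm_nonneg[of 0 B 0] cB by simp
  have x12: "1 \<le> x1 * x2" using mult_mono[of 1 x1 1 x2] x1 x2 by simp
  have low': "x1 * x2 \<le> 16 * (x3 * xB)" using low unfolding x1_def x2_def x3_def xB_def .
  have "x3 * xB > 0" using low' x12 by linarith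
  then have "x3 \<noteq> 0" "xB \<noteq> 0" by auto
  then have "mnorm S3 \<noteq> 0" "mnorm B \<noteq> 0" unfolding x3_def xB_def by auto
  moreover have "0 \<le> mnorm S3" "0 \<le> mnorm B" using x30 xB0 unfolding x3_def xB_def by auto
  ultimately have x3: "1 \<le> x3" and xB: "1 \<le> xB" unfolding x3_def xB_def by auto
  have d1: "1 \<le> d" unfolding d_def using bs(6) by simp
  have lgd: "2 \<le> lg d" by (rule lg_ge2[OF d1])
  let ?c = "real_of_int (4 * isqrt D + 4)"
  have cge: "1 \<le> ?c" using bs(1) by simp
  have lD: "isqrt D \<le> D"
  proof -
    have "isqrt D * 1 \<le> isqrt D * isqrt D" using bs(1) by (intro mult_left_mono) auto
    also have "\<dots> \<le> D" using bs(7) by (simp add: power2_eq_square)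
    finally show ?thesis by simp
  qed
  have c8: "?c \<le> 8 * d" unfolding d_def using lD bs(1) by simp
  have lg8: "lg 8 = 3" by (simp add: lg_def log2_8)
  have lg16: "lg 16 = 4" by (simp add: lg_def log2_16)
  have lgc: "lg ?c \<le> 3 + lg d"
  proof -
    have "lg ?c \<le> lg (8 * d)" by (rule lg_mono[OF cge c8])
    also have "\<dots> \<le> lg 8 + lg d" by (rule lg_mult) (use d1 in auto)
    finally show ?thesis using lg8 by simp
  qed
  have up': "x3 \<le> ?c * (x1 * x2) * xB"
    unfolding x1_def x2_def x3_def xB_def using up by (simp only: of_int_le_iff of_int_mult[symmetric])
  have cx: "1 \<le> ?c * (x1 * x2)" using mult_mono[OF cge x12] cge by simp
  have U: "lg x3 \<le> lg ?c + lg x1 + lg x2 + lg xB"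
  proof -
    have "lg x3 \<le> lg (?c * (x1 * x2) * xB)" by (rule lg_mono[OF x3 up'])
    also have "\<dots> \<le> lg (?c * (x1 * x2)) + lg xB" by (rule lg_mult[OF cx xB])
    also have "lg (?c * (x1 * x2)) \<le> lg ?c + lg (x1 * x2)" by (rule lg_mult[OF cge x12])
    also have "lg (x1 * x2) \<le> lg x1 + lg x2" by (rule lg_mult[OF x1 x2])
    finally show ?thesis by simp
  qed
  have x3B: "1 \<le> x3 * xB" using mult_mono[of 1 x3 1 xB] x3 xB by simp
  have L: "lg x1 + lg x2 \<le> 6 + lg x3 + lg xB"
  proof -
    have "lg x1 + lg x2 \<le> lg (x1 * x2) + 2" by (rule lg_add[OF x1 x2])
    also have "lg (x1 * x2) \<le> lg (16 * (x3 * xB))" by (rule lg_mono[OF x12 low'])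
    also have "lg (16 * (x3 * xB)) \<le> lg 16 + lg (x3 * xB)" by (rule lg_mult) (use x3B in auto)
    also have "lg (x3 * xB) \<le> lg x3 + lg xB" by (rule lg_mult[OF x3 xB])
    finally show ?thesis using lg16 by simp
  qed
  have hB: "lg xB \<le> c1 * lg d" using assms(11) unfolding xB_def d_def .
  have "\<bar>lg x3 - lg x1 - lg x2\<bar> \<le> (c1 + 4) * lg d"
    using U L lgc hB lgd by (simp add: algebra_simps abs_le_iff) 
  then show ?thesis unfolding x1_def x2_def x3_def d_def e1 e2 e3 .
qed


end
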